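(* Let $(X,d)$ be a metric space and let $U\subseteq F_{USCG}(X)$. Then $U$ is totally bounded in $(F_{USCG}(X),H_{\rm end})$ if and only if $U(\alpha)=\bigcup_{u\in U}[u]_\alpha$ is totally bounded in $X$ for each $\alpha\in(0,1]$.
   Context: A fuzzy set on $X$ is a function $u:X\to[0,1]$, with $\alpha$-cuts $[u]_\alpha=\{x: u(x)\ge\alpha\}$ for $\alpha\in(0,1]$ and $[u]_0=\overline{\{u>0\}}$. $F_{USC}(X)$ is the set of fuzzy sets with all $\alpha$-cuts ($\alpha\in[0,1]$) non-empty and closed; $F_{USCG}(X)=\{u\in F_{USC}(X): [u]_\alpha\text{ compact for all }\alpha\in(0,1]\}$. $X\times[0,1]$ is metrized by $\overline{d}((x,\alpha),(y,\beta))=d(x,y)+|\alpha-\beta|$; ${\rm end}\,u=\{(x,t)\in X\times[0,1]: u(x)\ge t\}$; $H_{\rm end}(u,v)=H({\rm end}\,u,{\rm end}\,v)$ where $H$ is the Hausdorff distance $H(A,B)=\max\{\sup_{a\in A}\inf_{b\in B}\overline{d}(a,b),\sup_{b\in B}\inf_{a\in A}\overline{d}(a,b)\}$. *)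

theory Defs
  imports "HOL-Analysis.Analysis"
begin

definition fuzzy :: "('a \<Rightarrow> real) \<Rightarrow> bool" where
  "fuzzy u \<longleftrightarrow> (\<forall>x. 0 \<le> u x \<and> u x \<le> 1)"

definition cut :: "('a::topological_space \<Rightarrow> real) \<Rightarrow> real \<Rightarrow> 'a set" where
  "cut u \<alpha> = (if \<alpha> = 0 then closure {x. u x > 0} else {x. u x \<ge> \<alpha>})"

definition F_USC :: "('a::topological_space \<Rightarrow> real) set" where
  "F_USC = {u. fuzzy u \<and> (\<forall>\<alpha>\<in>{0..1}. cut u \<alpha> \<noteq> {} \<and> closed (cut u \<alpha>))}"

definition F_USCG :: "('a::topological_space \<Rightarrow> real) set" where
  "F_USCG = {u \<in> F_USC. \<forall>\<alpha>\<in>{0<..1}. compact (cut u \<alpha>)}"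

definition dbar :: "('a::metric_space \<times> real) \<Rightarrow> ('a \<times> real) \<Rightarrow> real" where
  "dbar p q = dist (fst p) (fst q) + \<bar>snd p - snd q\<bar>"

definition endo :: "('a \<Rightarrow> real) \<Rightarrow> ('a \<times> real) set" where
  "endo u = {(x, t). t \<in> {0..1} \<and> u x \<ge> t}"

definition Haus :: "('a::metric_space \<times> real) set \<Rightarrow> ('a \<times> real) set \<Rightarrow> real" where
  "Haus A B = max (SUP a\<in>A. INF b\<in>B. dbar a b) (SUP b\<in>B. INF a\<in>A. dbar a b)"

definition H_end :: "('a::metric_space \<Rightarrow> real) \<Rightarrow> ('a \<Rightarrow> real) \<Rightarrow> real" where
  "H_end u v = Haus (endo u) (endo v)"

definition Hend_totally_bounded :: "('a::metric_space \<Rightarrow> real) set \<Rightarrow> bool" where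
  "Hend_totally_bounded U \<longleftrightarrow>
     (\<forall>\<epsilon>>0. \<exists>K. finite K \<and> K \<subseteq> U \<and> U \<subseteq> (\<Union>v\<in>K. {u. H_end u v < \<epsilon>}))"

end

theory Submission
  imports Defs
begin

lemma compact_net:
  fixes C :: "'a::metric_space set"
  assumes "compact C" "e > 0"
  shows "\<exists>k. finite k \<and> C \<subseteq> (\<Union>x\<in>k. {y. dist x y < e})"
proof -
  have cv: "C \<subseteq> \<Union>((\<lambda>x. ball x e) ` C)" using assms(2) by auto
  obtain t where "finite t" "t \<subseteq> C" "C \<subseteq> \<Union>((\<lambda>x. ball x e) ` t)"
    by (rule compactE_image[OF assms(1), of C "\<lambda>x. ball x e"]) (use cv in auto)
  then show ?thesis by (auto simp: ball_def)
qed

lemma Haus_le: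
  assumes "A \<noteq> {}" "B \<noteq> {}" "\<forall>a\<in>A. \<exists>b\<in>B. dbar a b \<le> c" "\<forall>b\<in>B. \<exists>a\<in>A. dbar a b \<le> c"
  shows "Haus A B \<le> c"
proof -
  have nn: "\<And>a b. 0 \<le> dbar a b" by (simp add: dbar_def)
  have bb1: "\<And>a. bdd_below ((\<lambda>b. dbar a b) ` B)"
    by (rule bdd_belowI2[where m=0], rule nn)
  have bb2: "\<And>b. bdd_below ((\<lambda>a. dbar a b) ` A)"
    by (rule bdd_belowI2[where m=0], rule nn)
  note bb = bb1 bb2
  have 1: "(SUP a\<in>A. INF b\<in>B. dbar a b) \<le> c"
  proof (rule cSUP_least[OF assms(1)])
    fix a assume "a \<in> A"
    then obtain b where "b \<in> B" "dbar a b \<le> c" using assms(3) by auto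
    then show "(INF b\<in>B. dbar a b) \<le> c" using cINF_lower2[OF bb(1)] by blast
  qed
  have 2: "(SUP b\<in>B. INF a\<in>A. dbar a b) \<le> c"
  proof (rule cSUP_least[OF assms(2)])
    fix b assume "b \<in> B"
    then obtain a where "a \<in> A" "dbar a b \<le> c" using assms(4) by auto
    then show "(INF a\<in>A. dbar a b) \<le> c" using cINF_lower2[OF bb(2)] by blast
  qed
  show ?thesis using 1 2 by (simp add: Haus_def)
qed

lemma Haus_lt:
  assumes "\<forall>a\<in>A. \<exists>b\<in>B. dbar a b \<le> C" "Haus A B < e" "a \<in> A"
  shows "\<exists>b\<in>B. dbar a b < e"
proof -
  have nn: "\<And>a b. 0 \<le> dbar a b" by (simp add: dbar_def)
  have bb: "\<And>a. bdd_below ((\<lambda>b. dbar a b) ` B)"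
    by (rule bdd_belowI2[where m=0], rule nn)
  have B: "B \<noteq> {}" using assms(1,3) by auto
  have le: "\<And>a. a \<in> A \<Longrightarrow> (INF b\<in>B. dbar a b) \<le> C"
  proof -
    fix a assume "a \<in> A"
    then obtain b where "b \<in> B" "dbar a b \<le> C" using assms(1) by auto
    then show "(INF b\<in>B. dbar a b) \<le> C" using cINF_lower2[OF bb] by blast
  qed
  have "bdd_above ((\<lambda>a. INF b\<in>B. dbar a b) ` A)"
    by (rule bdd_aboveI2, rule le)
  then have "(INF b\<in>B. dbar a b) \<le> (SUP a\<in>A. INF b\<in>B. dbar a b)"
    using cSUP_upper[OF assms(3)] by blast
  also have "\<dots> \<le> Haus A B" by (simp add: Haus_def)
  finally have "(INF b\<in>B. dbar a b) < e" using assms(2) by linarith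
  then show ?thesis using cINF_less_iff[OF B bb] by blast
qed

lemma endo_near0:
  assumes "fuzzy v"
  shows "\<forall>a\<in>endo u. \<exists>b\<in>endo v. dbar a b \<le> 1"
proof
  fix a assume "a \<in> endo u"
  then obtain x t where a: "a = (x,t)" "t \<in> {0..1}" by (auto simp: endo_def)
  have "(x,0) \<in> endo v" using assms by (auto simp: endo_def fuzzy_def)
  moreover have "dbar a (x,0) \<le> 1" using a by (auto simp: dbar_def)
  ultimately show "\<exists>b\<in>endo v. dbar a b \<le> 1" by blast
qed

lemma endo_ne:
  assumes "fuzzy v" shows "endo v \<noteq> {}"
proof -
  have "(undefined,0) \<in> endo v" using assms by (auto simp: endo_def fuzzy_def)
  then show ?thesis by blast
qed

lemma F_USCG_fuzzy: "u \<in> F_USCG \<Longrightarrow> fuzzy u"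
  by (simp add: F_USCG_def F_USC_def)

lemma F_USCG_compact: "u \<in> F_USCG \<Longrightarrow> \<alpha> \<in> {0<..1} \<Longrightarrow> compact (cut u \<alpha>)"
  by (simp add: F_USCG_def)

lemma dbar_sym: "dbar a b = dbar b a"
  by (simp add: dbar_def dist_commute abs_minus_commute)

lemma fwd:
  fixes U :: "('a::metric_space \<Rightarrow> real) set"
  assumes U: "U \<subseteq> F_USCG" and tb: "Hend_totally_bounded U" and al: "\<alpha> \<in> {0<..1}"
  shows "totally_bounded (\<Union>u\<in>U. cut u \<alpha>)"
proof -
  have "\<forall>e>0. \<exists>k. finite k \<and> (\<Union>u\<in>U. cut u \<alpha>) \<subseteq> (\<Union>x\<in>k. {y. dist x y < e})"
  proof (intro allI impI)
    fix e :: real assume e: "e > 0"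
    define \<delta> where "\<delta> = min (e/2) (\<alpha>/2)"
    have \<delta>: "\<delta> > 0" using e al by (auto simp: \<delta>_def)
    obtain K where K: "finite K" "K \<subseteq> U" "U \<subseteq> (\<Union>v\<in>K. {u. H_end u v < \<delta>})"
    proof -
      have "\<exists>K. finite K \<and> K \<subseteq> U \<and> U \<subseteq> (\<Union>v\<in>K. {u. H_end u v < \<delta>})"
        using tb \<delta> unfolding Hend_totally_bounded_def by simp
      thus ?thesis using that by blast
    qed
    have a2: "\<alpha>/2 \<in> {0<..1}" using al by auto
    have "compact (\<Union>v\<in>K. cut v (\<alpha>/2))"
    proof (rule compact_UN)
      show "finite K" by (fact K(1))
      fix v assume "v \<in> K"
      hence "v \<in> F_USCG" using K(2) U by blast
      thus "compact (cut v (\<alpha>/2))" using a2 by (rule F_USCG_compact)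
    qed
    moreover have e2: "e/2 > 0" using e by simp
    ultimately have "\<exists>k. finite k \<and> (\<Union>v\<in>K. cut v (\<alpha>/2)) \<subseteq> (\<Union>x\<in>k. {y. dist x y < e/2})"
      by (rule compact_net)
    then obtain k where k: "finite k" "(\<Union>v\<in>K. cut v (\<alpha>/2)) \<subseteq> (\<Union>x\<in>k. {y. dist x y < e/2})"
      by blast
    show "\<exists>k. finite k \<and> (\<Union>u\<in>U. cut u \<alpha>) \<subseteq> (\<Union>x\<in>k. {y. dist x y < e})"
    proof (intro exI conjI)
      show "finite k" by (fact k(1))
      show "(\<Union>u\<in>U. cut u \<alpha>) \<subseteq> (\<Union>x\<in>k. {y. dist x y < e})"
      proof
        fix x assume "x \<in> (\<Union>u\<in>U. cut u \<alpha>)"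
        then obtain u where u: "u \<in> U" "x \<in> cut u \<alpha>" by blast
        then obtain v where v: "v \<in> K" "H_end u v < \<delta>" using K by blast
        have vf: "fuzzy v" using v K U F_USCG_fuzzy by blast
        have xa: "(x,\<alpha>) \<in> endo u" using u al by (auto simp: cut_def endo_def)
        obtain b where b: "b \<in> endo v" "dbar (x,\<alpha>) b < \<delta>"
          using Haus_lt[OF endo_near0[OF vf] v(2)[unfolded H_end_def] xa] by blast
        obtain y t where yt: "b = (y,t)" by (cases b)
        have s: "dist x y + \<bar>\<alpha> - t\<bar> < \<delta>" using b yt by (simp add: dbar_def)
        have dl: "\<delta> \<le> \<alpha>/2" "\<delta> \<le> e/2" by (simp_all add: \<delta>_def)
        have d0: "0 \<le> dist x y" by simp
        have d1: "dist x y < e/2" using s dl d0 by linarith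
        have d2: "t > \<alpha>/2" using s dl d0 by linarith
        have "v y \<ge> t" using b yt by (simp add: endo_def)
        hence "y \<in> cut v (\<alpha>/2)" using al d2 by (auto simp: cut_def)
        hence "y \<in> (\<Union>v\<in>K. cut v (\<alpha>/2))" using v(1) by blast
        then obtain z where z: "z \<in> k" "dist z y < e/2" using k(2) by blast
        have "dist z x < e" using z d1 dist_triangle[of z x y] by (simp add: dist_commute)
        thus "x \<in> (\<Union>x\<in>k. {y. dist x y < e})" using z by blast
      qed
    qed
  qed
  thus ?thesis by (simp add: totally_bounded_metric)
qed

lemma bwd:
  fixes U :: "('a::metric_space \<Rightarrow> real) set"
  assumes U: "U \<subseteq> F_USCG" and tb: "\<forall>\<alpha>\<in>{0<..1}. totally_bounded (\<Union>u\<in>U. cut u \<alpha>)"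
  shows "Hend_totally_bounded U"
  unfolding Hend_totally_bounded_def
proof (intro allI impI)
  fix e :: real assume e: "e > 0"
  have e2: "e/2 > 0" using e by simp
  obtain m :: nat where m: "inverse (real (Suc m)) < e/2"
    using reals_Archimedean[OF e2] by blast
  define n where "n = Suc m"
  have n1: "n > 0" by (simp add: n_def)
  have n2: "1 / real n < e/2" using m by (simp add: n_def inverse_eq_divide)
  note n = n1 n2
  define \<delta> where "\<delta> = e/8"
  have \<delta>: "\<delta> > 0" using e by (simp add: \<delta>_def)
  let ?a = "1 / real n"
  have a01: "?a \<in> {0<..1}" using n1 by (simp add: n_def)
  obtain N where N: "finite N" "(\<Union>u\<in>U. cut u ?a) \<subseteq> (\<Union>p\<in>N. {y. dist p y < \<delta>})"
  proof -
    have "totally_bounded (\<Union>u\<in>U. cut u ?a)" using tb a01 by blast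
    hence "\<exists>k. finite k \<and> (\<Union>u\<in>U. cut u ?a) \<subseteq> (\<Union>x\<in>k. {y. dist x y < \<delta>})"
      using \<delta> unfolding totally_bounded_metric by simp
    thus ?thesis using that by blast
  qed
  define sig where "sig u = {(i,p). i \<in> {1..n} \<and> p \<in> N \<and> (\<exists>x\<in>cut u (real i / real n). dist p x < \<delta>)}" for u
  have key: "\<forall>a\<in>endo u. \<exists>b\<in>endo v. dbar a b \<le> 2*\<delta> + ?a"
    if uv: "u \<in> U" "v \<in> U" "sig u = sig v" for u v
  proof
    fix a assume "a \<in> endo u"
    then obtain x t where a: "a = (x,t)" "0 \<le> t" "t \<le> 1" "u x \<ge> t" by (cases a) (auto simp: endo_def)
    have vf: "fuzzy v" using uv U F_USCG_fuzzy by blast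
    show "\<exists>b\<in>endo v. dbar a b \<le> 2*\<delta> + ?a"
    proof (cases "t < ?a")
      case True
      have "(x,0) \<in> endo v" using vf by (auto simp: endo_def fuzzy_def)
      moreover have "dbar a (x,0) \<le> 2*\<delta> + ?a" using True a \<delta> by (simp add: dbar_def)
      ultimately show ?thesis by blast
    next
      case False
      define i where "i = nat \<lfloor>t * real n\<rfloor>"
      have tn1: "t * real n \<ge> 1" using False n by (simp add: field_simps)
      have tnn: "t * real n \<le> real n" using a n by simp
      have fl1: "1 \<le> \<lfloor>t * real n\<rfloor>" using tn1 by (simp add: le_floor_iff)
      have itn: "real i \<le> t * real n" "t * real n < real i + 1"
        using fl1 by (auto simp: i_def)
      have i1: "1 \<le> i" using itn(2) tn1 by linarith
      have iN: "i \<le> n" using itn tnn by linarith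
      have r1: "real i / real n \<le> t" using itn n by (simp add: field_simps)
      have r2: "t - real i / real n < ?a"
      proof -
        have "t - real i / real n = (t * real n - real i) / real n" using n1 by (simp add: field_simps)
        also have "\<dots> < 1 / real n" using itn n1 by (intro divide_strict_right_mono) auto
        finally show ?thesis .
      qed
      have r3: "?a \<le> real i / real n" using i1 n by (simp add: field_simps)
      have ipos: "real i / real n \<noteq> 0" using i1 n by simp
      have xi: "x \<in> cut u (real i / real n)" using a r1 ipos by (auto simp: cut_def)
      have "x \<in> cut u ?a" using a r1 r3 n by (auto simp: cut_def)
      then obtain p where p: "p \<in> N" "dist p x < \<delta>" using N uv by blast
      have "(i,p) \<in> sig u" using p xi i1 iN by (auto simp: sig_def)
      hence "(i,p) \<in> sig v" using uv by simp
      then obtain y where y: "y \<in> cut v (real i / real n)" "dist p y < \<delta>" by (auto simp: sig_def)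
      have "(y, real i / real n) \<in> endo v" using y ipos iN n r1 a
        by (auto simp: cut_def endo_def split: if_splits)
      moreover have "dbar a (y, real i / real n) \<le> 2*\<delta> + ?a"
      proof -
        have "dist x y \<le> dist p x + dist p y" by (simp add: dist_triangle3)
        thus ?thesis using a r1 r2 p y by (simp add: dbar_def)
      qed
      ultimately show ?thesis by blast
    qed
  qed
  define K where "K = (\<lambda>s. SOME v. v \<in> U \<and> sig v = s) ` (sig ` U)"
  have "sig ` U \<subseteq> Pow ({1..n} \<times> N)" by (auto simp: sig_def)
  hence fin: "finite (sig ` U)" by (rule finite_subset) (simp add: N(1))
  have rep: "(SOME v. v \<in> U \<and> sig v = sig u) \<in> U \<and> sig (SOME v. v \<in> U \<and> sig v = sig u) = sig u"
    if "u \<in> U" for u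
  proof -
    have "\<exists>v. v \<in> U \<and> sig v = sig u" using that by blast
    from someI_ex[OF this] show ?thesis .
  qed
  show "\<exists>K. finite K \<and> K \<subseteq> U \<and> U \<subseteq> (\<Union>v\<in>K. {u. H_end u v < e})"
  proof (intro exI conjI)
    show "finite K" using fin by (simp add: K_def)
    show "K \<subseteq> U" using rep by (auto simp: K_def)
    show "U \<subseteq> (\<Union>v\<in>K. {u. H_end u v < e})"
    proof
      fix u assume u: "u \<in> U"
      define v where "v = (SOME v. v \<in> U \<and> sig v = sig u)"
      have v: "v \<in> U" "sig v = sig u" using rep[OF u] by (auto simp: v_def)
      have vK: "v \<in> K" using u by (auto simp: K_def v_def)
      have uf: "fuzzy u" "fuzzy v" using u v U F_USCG_fuzzy by blast+
      have k1: "\<forall>a\<in>endo u. \<exists>b\<in>endo v. dbar a b \<le> 2*\<delta> + ?a" using key u v by simp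
      have k2: "\<forall>b\<in>endo v. \<exists>a\<in>endo u. dbar a b \<le> 2*\<delta> + ?a"
        using key[OF v(1) u v(2)] dbar_sym by metis
      have "H_end u v \<le> 2*\<delta> + ?a" unfolding H_end_def
        by (rule Haus_le[OF endo_ne[OF uf(1)] endo_ne[OF uf(2)] k1 k2])
      also have "\<dots> < e" using n2 e by (simp add: \<delta>_def)
      finally show "u \<in> (\<Union>v\<in>K. {u. H_end u v < e})" using vK by blast
    qed
  qed
qed

theorem theorem5p8:
  fixes U :: "('a::metric_space \<Rightarrow> real) set"
  assumes "U \<subseteq> F_USCG"
  shows "Hend_totally_bounded U \<longleftrightarrow>
         (\<forall>\<alpha>\<in>{0<..1}. totally_bounded (\<Union>u\<in>U. cut u \<alpha>))"
  using fwd[OF assms] bwd[OF assms] by blast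

end
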